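(* Let $\lambda=(a,b)$ with $a\ge b\ge1$. Then $$\xi(q)=\sum_k|S_k(\lambda)|q^k=\sum_{i\ge0}|\mathcal D_\lambda(i)|\,(1+q)^i .$$
   Context: $N=a+b$; the shape $(a,b)$ has $a$ boxes in row 1 and $b$ in row 2, left-justified. A row-standard filling uses $1,\dots,N$ once each with rows strictly increasing. Inversion pairs of a row-standard $\tau$: for a box $c$ and $r\ge1$ let $c^{(r)}$ be the box $r$ positions to its right, if it exists. For distinct boxes $c,c'$ in the same column with $\tau(c)<\tau(c')$, let $r\ge1$ be least such that one of $c^{(r)},c'^{(r)}$ does not exist or $\tau(c^{(r)})\ne\tau(c'^{(r)})$; $(c,c')$ is an inversion pair if either (one does not exist and $c$ lies below $c'$) or (both exist and $\tau(c^{(r)})>\tau(c'^{(r)})$). $S_k(\lambda)$: row-standard fillings of shape $\lambda$ with exactly $k$ inversion pairs. A Dyck path of shape $(a,b)$ is a lattice path $\{v_0,\dots,v_{a+b}\}$ from $(0,0)$ to $(a,b)$ with steps $(1,0)$ or $(0,1)$ and every point $(x,y)$ satisfying $y\le x$; $\mathcal D_\lambda$ is the set of these. A return to ground is an index $i\ge1$ with $v_i=(x,x)$ for some $x$; $\mathcal D_\lambda(i)$ is the set of paths in $\mathcal D_\lambda$ with exactly $i$ returns to ground. *)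

theory Defs
  imports "HOL-Computational_Algebra.Polynomial"
begin

(* Boxes of the two-row shape (a,b): (row, column), rows 0 (= row 1, top) and
   1 (= row 2, bottom), columns 0-based. *)
definition boxes :: "nat \<Rightarrow> nat \<Rightarrow> (nat \<times> nat) set" where
  "boxes a b = {(0, j) | j. j < a} \<union> {(1, j) | j. j < b}"

(* row-standard fillings; tau is taken to be 0 outside the shape so that
   fillings are determined by their values on the boxes *)
definition row_standard :: "nat \<Rightarrow> nat \<Rightarrow> ((nat \<times> nat) \<Rightarrow> nat) set" where
  "row_standard a b = {\<tau>. bij_betw \<tau> (boxes a b) {1..a+b}
      \<and> (\<forall>c. c \<notin> boxes a b \<longrightarrow> \<tau> c = 0)
      \<and> (\<forall>i j. (i, Suc j) \<in> boxes a b \<longrightarrow> \<tau> (i, j) < \<tau> (i, Suc j))}"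

definition shiftr :: "nat \<times> nat \<Rightarrow> nat \<Rightarrow> nat \<times> nat" where
  "shiftr c r = (fst c, snd c + r)"

definition is_inversion_pair ::
  "nat \<Rightarrow> nat \<Rightarrow> ((nat \<times> nat) \<Rightarrow> nat) \<Rightarrow> nat \<times> nat \<Rightarrow> nat \<times> nat \<Rightarrow> bool" where
  "is_inversion_pair a b \<tau> c c' \<longleftrightarrow>
     c \<in> boxes a b \<and> c' \<in> boxes a b \<and> c \<noteq> c' \<and> snd c = snd c' \<and> \<tau> c < \<tau> c' \<and>
     (let r = (LEAST r. 1 \<le> r \<and> (shiftr c r \<notin> boxes a b \<or> shiftr c' r \<notin> boxes a b
                    \<or> \<tau> (shiftr c r) \<noteq> \<tau> (shiftr c' r)))
      in ((shiftr c r \<notin> boxes a b \<or> shiftr c' r \<notin> boxes a b) \<and> fst c > fst c')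
         \<or> (shiftr c r \<in> boxes a b \<and> shiftr c' r \<in> boxes a b
            \<and> \<tau> (shiftr c r) > \<tau> (shiftr c' r)))"

definition num_inversions :: "nat \<Rightarrow> nat \<Rightarrow> ((nat \<times> nat) \<Rightarrow> nat) \<Rightarrow> nat" where
  "num_inversions a b \<tau> = card {(c, c'). is_inversion_pair a b \<tau> c c'}"

definition S :: "nat \<Rightarrow> nat \<Rightarrow> nat \<Rightarrow> ((nat \<times> nat) \<Rightarrow> nat) set" where
  "S a b k = {\<tau> \<in> row_standard a b. num_inversions a b \<tau> = k}"

definition dyck_paths :: "nat \<Rightarrow> nat \<Rightarrow> (nat \<times> nat) list set" where
  "dyck_paths a b = {v. length v = a + b + 1 \<and> v ! 0 = (0, 0) \<and> v ! (a + b) = (a, b)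
      \<and> (\<forall>i < a + b. v ! Suc i = (fst (v ! i) + 1, snd (v ! i))
                    \<or> v ! Suc i = (fst (v ! i), snd (v ! i) + 1))
      \<and> (\<forall>i \<le> a + b. snd (v ! i) \<le> fst (v ! i))}"

definition returns :: "(nat \<times> nat) list \<Rightarrow> nat" where
  "returns v = card {i. 1 \<le> i \<and> i < length v \<and> fst (v ! i) = snd (v ! i)}"

definition D :: "nat \<Rightarrow> nat \<Rightarrow> nat \<Rightarrow> (nat \<times> nat) list set" where
  "D a b i = {v \<in> dyck_paths a b. returns v = i}"

end

theory Submission
  imports Defs
begin


definition stp :: "bool \<Rightarrow> int" where "stp x = (if x then -1 else 1)"
definition ht :: "bool list \<Rightarrow> int" where "ht w = sum_list (map stp w)"
definition hk :: "bool list \<Rightarrow> nat \<Rightarrow> int" where "hk w k = ht (take k w)"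
definition sd :: "bool list \<Rightarrow> nat \<Rightarrow> bool" where "sd w k = (hk w (k-1) + hk w k < 0)"
definition nx :: "bool list \<Rightarrow> bool \<Rightarrow> nat \<Rightarrow> bool" where
  "nx w c k = (if k < length w then sd w (Suc k) else c)"
definition cr :: "bool list \<Rightarrow> bool \<Rightarrow> nat" where
  "cr w c = card {k. 1 \<le> k \<and> k \<le> length w \<and> hk w k = 0 \<and> sd w k \<noteq> nx w c k}"
definition dyw :: "bool list \<Rightarrow> bool" where "dyw w = (\<forall>k \<le> length w. 0 \<le> hk w k)"
definition zr :: "bool list \<Rightarrow> nat" where
  "zr w = card {k. 1 \<le> k \<and> k \<le> length w \<and> hk w k = 0}"

definition Lp :: "nat \<Rightarrow> int \<Rightarrow> bool \<Rightarrow> int poly" where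
  "Lp n h c = (\<Sum>w\<in>{w. length w = n \<and> ht w = h}. [:0,1:] ^ cr w c)"
definition Rp :: "nat \<Rightarrow> int \<Rightarrow> int poly" where
  "Rp n h = (\<Sum>w\<in>{w. length w = n \<and> dyw w \<and> ht w = h}. [:1,1:] ^ zr w)"

lemma fin_len: "finite {w::bool list. length w = n \<and> P w}"
proof -
  have "finite {xs::bool list. set xs \<subseteq> UNIV \<and> length xs = n}"
    by (rule finite_lists_length_eq) simp
  then show ?thesis by (rule finite_subset[rotated]) auto
qed

lemma sum_snoc:
  "(\<Sum>w\<in>{w. length w = Suc n \<and> P w}. g w) =
   (\<Sum>w\<in>{w. length w = n \<and> P (w@[False])}. g (w@[False])) +
   (\<Sum>w\<in>{w. length w = n \<and> P (w@[True])}. g (w@[True]))"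
proof -
  have eq: "{w. length w = Suc n \<and> P w} =
     (\<lambda>w. w@[False]) ` {w. length w = n \<and> P (w@[False])} \<union>
     (\<lambda>w. w@[True]) ` {w. length w = n \<and> P (w@[True])}"
  proof (rule set_eqI, rule iffI)
    fix w assume "w \<in> {w. length w = Suc n \<and> P w}"
    then have l: "length w = Suc n" "P w" by auto
    then obtain u x where w: "w = u @ [x]"
      by (metis length_Suc_conv_rev)
    with l show "w \<in> (\<lambda>w. w@[False]) ` {w. length w = n \<and> P (w@[False])} \<union>
     (\<lambda>w. w@[True]) ` {w. length w = n \<and> P (w@[True])}"
      by (cases x) auto
  qed auto
  show ?thesis
    unfolding eq
    by (subst sum.union_disjoint) (auto intro: fin_len simp: sum.reindex inj_on_def)
qed

lemma ht_snoc[simp]: "ht (w @ [x]) = ht w + stp x"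
  by (simp add: ht_def)

lemma hk_snoc: "k \<le> length w \<Longrightarrow> hk (w @ [x]) k = hk w k"
  by (simp add: hk_def)

lemma hk_full[simp]: "hk w (length w) = ht w"
  by (simp add: hk_def)

lemma sd_snoc: "k \<le> length w \<Longrightarrow> sd (w @ [x]) k = sd w k"
  by (simp add: sd_def hk_snoc)

lemma cr_snoc:
  "cr (w @ [x]) c = cr w (sd (w @ [x]) (Suc (length w)))
     + (if ht (w@[x]) = 0 \<and> sd (w @ [x]) (Suc (length w)) \<noteq> c then 1 else 0)"
proof -
  let ?s = "sd (w @ [x]) (Suc (length w))"
  let ?A = "{k. 1 \<le> k \<and> k \<le> length w \<and> hk w k = 0 \<and> sd w k \<noteq> nx w ?s k}"
  have eq: "{k. 1 \<le> k \<and> k \<le> length (w@[x]) \<and> hk (w@[x]) k = 0 \<and> sd (w@[x]) k \<noteq> nx (w@[x]) c k}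
     = ?A \<union> (if ht (w@[x]) = 0 \<and> ?s \<noteq> c then {Suc (length w)} else {})"
  proof -
    have "k \<le> length w \<Longrightarrow> nx (w@[x]) c k = nx w ?s k" for k
      by (auto simp: nx_def sd_snoc)
    moreover have "hk (w@[x]) (Suc (length w)) = ht (w@[x])"
      using hk_full[of "w@[x]"] by simp
    moreover have "nx (w@[x]) c (Suc (length w)) = c" by (simp add: nx_def)
    ultimately show ?thesis
      by (auto simp: hk_snoc sd_snoc le_Suc_eq)
  qed
  have fin: "finite ?A" by (rule finite_subset[of _ "{..length w}"]) auto
  show ?thesis
    unfolding cr_def eq using fin by (auto simp: card_insert_if)
qed

lemma zr_snoc: "zr (w @ [x]) = zr w + (if ht (w@[x]) = 0 then 1 else 0)"
proof -
  have eq: "{k. 1 \<le> k \<and> k \<le> length (w@[x]) \<and> hk (w@[x]) k = 0}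
     = {k. 1 \<le> k \<and> k \<le> length w \<and> hk w k = 0} \<union> (if ht (w@[x]) = 0 then {Suc (length w)} else {})"
  proof -
    have "hk (w@[x]) (Suc (length w)) = ht (w@[x])"
      using hk_full[of "w@[x]"] by simp
    then show ?thesis by (auto simp: hk_snoc le_Suc_eq)
  qed
  have fin: "finite {k. 1 \<le> k \<and> k \<le> length w \<and> hk w k = 0}"
    by (rule finite_subset[of _ "{..length w}"]) auto
  show ?thesis unfolding zr_def eq using fin by (auto simp: card_insert_if)
qed

lemma dyw_snoc: "dyw (w @ [x]) = (dyw w \<and> 0 \<le> ht (w@[x]))"
proof -
  have "hk (w@[x]) (Suc (length w)) = ht (w@[x])"
    using hk_full[of "w@[x]"] by simp
  then show ?thesis by (auto simp: dyw_def hk_snoc le_Suc_eq)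
qed

lemma sd_last: "sd (w @ [x]) (Suc (length w)) = (2 * ht (w@[x]) - stp x < 0)"
proof -
  have "hk (w@[x]) (Suc (length w)) = ht (w@[x])"
    using hk_full[of "w@[x]"] by simp
  then show ?thesis by (simp add: sd_def hk_snoc, arith)
qed

lemma Lp0: "Lp 0 h c = (if h = 0 then 1 else 0)"
proof -
  have "{w::bool list. length w = 0 \<and> ht w = h} = (if h=0 then {[]} else {})"
    by (auto simp: ht_def)
  moreover have "cr [] c = 0"
  proof -
    have "{k. 1 \<le> k \<and> k \<le> length ([]::bool list) \<and> hk [] k = 0 \<and> sd [] k \<noteq> nx [] c k} = {}" by auto
    then show ?thesis unfolding cr_def by (simp only: card.empty)
  qed
  ultimately show ?thesis by (simp add: Lp_def)
qed

lemma Rp0: "Rp 0 h = (if h = 0 then 1 else 0)"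
proof -
  have "{w::bool list. length w = 0 \<and> dyw w \<and> ht w = h} = (if h=0 then {[]} else {})"
    by (auto simp: ht_def dyw_def hk_def)
  moreover have "zr [] = 0"
  proof -
    have "{k. 1 \<le> k \<and> k \<le> length ([]::bool list) \<and> hk [] k = 0} = {}" by auto
    then show ?thesis unfolding zr_def by (simp only: card.empty)
  qed
  ultimately show ?thesis by (simp add: Rp_def)
qed

lemma Lp_Suc: "Lp (Suc n) h c =
   Lp n (h - 1) (h \<le> 0) * [:0,1:] ^ (if h = 0 \<and> \<not> c then 1 else 0)
 + Lp n (h + 1) (h < 0) * [:0,1:] ^ (if h = 0 \<and> c then 1 else 0)"
proof -
  have ei: "(2*h < 1) = (h \<le> 0)" "(2*h+1<0) = (h<0)" by arith+
  have "Lp (Suc n) h c = (\<Sum>w\<in>{w. length w = n \<and> ht w = h - 1}. [:0,1:] ^ cr (w@[False]) c)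
    + (\<Sum>w\<in>{w. length w = n \<and> ht w = h + 1}. [:0,1:] ^ cr (w@[True]) c)"
    unfolding Lp_def by (subst sum_snoc) (simp add: stp_def algebra_simps)
  also have "\<dots> = (\<Sum>w\<in>{w. length w = n \<and> ht w = h - 1}. [:0,1:] ^ cr w (h \<le> 0) * [:0,1:] ^ (if h = 0 \<and> \<not> c then 1 else 0))
    + (\<Sum>w\<in>{w. length w = n \<and> ht w = h + 1}. [:0,1:] ^ cr w (h < 0) * [:0,1:] ^ (if h = 0 \<and> c then 1 else 0))"
    by (intro arg_cong2[where f="(+)"] sum.cong refl)
       (auto simp: cr_snoc sd_last stp_def power_add ei)
  finally show ?thesis by (simp add: Lp_def sum_distrib_right)
qed

lemma Rp_Suc: "Rp (Suc n) h =
   (if 0 \<le> h then (Rp n (h - 1) + Rp n (h + 1)) * [:1,1:] ^ (if h = 0 then 1 else 0) else 0)"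
proof -
  have "Rp (Suc n) h = (\<Sum>w\<in>{w. length w = n \<and> dyw w \<and> 0 \<le> h \<and> ht w = h - 1}. [:1,1:] ^ zr (w@[False]))
    + (\<Sum>w\<in>{w. length w = n \<and> dyw w \<and> 0 \<le> h \<and> ht w = h + 1}. [:1,1:] ^ zr (w@[True]))"
    unfolding Rp_def
    by (subst sum_snoc, intro arg_cong2[where f="(+)"] sum.cong refl)
       (auto simp: stp_def dyw_snoc)
  also have "\<dots> = (\<Sum>w\<in>{w. length w = n \<and> dyw w \<and> 0 \<le> h \<and> ht w = h - 1}. [:1,1:] ^ zr w * [:1,1:] ^ (if h = 0 then 1 else 0))
    + (\<Sum>w\<in>{w. length w = n \<and> dyw w \<and> 0 \<le> h \<and> ht w = h + 1}. [:1,1:] ^ zr w * [:1,1:] ^ (if h = 0 then 1 else 0))"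
    by (intro arg_cong2[where f="(+)"] sum.cong refl)
       (auto simp: zr_snoc stp_def power_add)
  finally show ?thesis
    by (cases "0 \<le> h") (simp_all add: Rp_def sum_distrib_right distrib_right)
qed

lemma Rp_neg: "h < 0 \<Longrightarrow> Rp n h = 0"
  by (cases n) (simp_all add: Rp0 Rp_Suc)

lemma L_eq_R: "Lp n h c = Rp n \<bar>h\<bar>"
proof (induction n arbitrary: h c)
  case 0 then show ?case by (simp add: Lp0 Rp0)
next
  case (Suc n)
  show ?case
  proof (cases "h = 0")
    case True
    then show ?thesis
      by (cases c) (simp_all add: Lp_Suc Rp_Suc Suc.IH Rp_neg algebra_simps)
  next
    case False
    show ?thesis
    proof (cases "h > 0")
      case True
      then show ?thesis by (simp add: Lp_Suc Rp_Suc Suc.IH abs_if add.commute)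
    next
      case F: False
      with False have h: "h < 0" by simp
      have "Lp (Suc n) h c = Rp n (-h+1) + Rp n \<bar>h+1\<bar>"
        using h by (simp add: Lp_Suc Suc.IH abs_if)
      also have "\<bar>h+1\<bar> = -h - 1" using h by simp
      finally show ?thesis using h by (simp add: Rp_Suc algebra_simps)
    qed
  qed
qed





definition nF :: "bool list \<Rightarrow> nat" where "nF w = length (filter Not w)"
definition nT :: "bool list \<Rightarrow> nat" where "nT w = length (filter id w)"
definition pt :: "bool list \<Rightarrow> nat \<Rightarrow> nat \<times> nat" where
  "pt w k = (nF (take k w), nT (take k w))"
definition pts :: "bool list \<Rightarrow> (nat \<times> nat) list" where
  "pts w = map (pt w) [0..<Suc (length w)]"
definition wd :: "(nat \<times> nat) list \<Rightarrow> bool list" where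
  "wd v = map (\<lambda>i. snd (v ! Suc i) \<noteq> snd (v ! i)) [0..<length v - 1]"

lemma ht_nFT: "ht w = int (nF w) - int (nT w)"
  by (induction w) (auto simp: ht_def nF_def nT_def stp_def)

lemma nFT_len: "nF w + nT w = length w"
  by (induction w) (auto simp: nF_def nT_def)

lemma take_Suc_nth': "i < length w \<Longrightarrow> take (Suc i) w = take i w @ [w ! i]"
  by (simp add: take_Suc_conv_app_nth)

lemma pt_Suc: "i < length w \<Longrightarrow> pt w (Suc i) =
   (if w ! i then (fst (pt w i), snd (pt w i) + 1) else (fst (pt w i) + 1, snd (pt w i)))"
  by (simp add: pt_def take_Suc_nth' nF_def nT_def)

lemma pt0[simp]: "pt w 0 = (0,0)" by (simp add: pt_def nF_def nT_def)

lemma hk_pt: "hk w k = int (fst (pt w k)) - int (snd (pt w k))"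
  by (simp add: hk_def pt_def ht_nFT)

lemma pts_dyck:
  "pts w \<in> dyck_paths a b \<longleftrightarrow> length w = a + b \<and> dyw w \<and> ht w = int a - int b"
proof
  assume A: "pts w \<in> dyck_paths a b"
  then have l: "length w = a + b" by (simp add: dyck_paths_def pts_def)
  have "pts w ! (a+b) = (a,b)" using A by (simp add: dyck_paths_def)
  then have "pt w (a+b) = (a,b)" using l by (simp add: pts_def del: upt_Suc)
  then have e: "nF w = a" "nT w = b" using l by (simp_all add: pt_def)
  have "dyw w"
    unfolding dyw_def
  proof (intro allI impI)
    fix k assume k: "k \<le> length w"
    have "\<forall>i \<le> a + b. snd (pts w ! i) \<le> fst (pts w ! i)" using A by (simp add: dyck_paths_def)
    then have "snd (pts w ! k) \<le> fst (pts w ! k)" using k l by simp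
    then show "0 \<le> hk w k" using k
      by (simp add: pts_def hk_pt del: upt_Suc)
  qed
  then show "length w = a + b \<and> dyw w \<and> ht w = int a - int b"
    using l e by (simp add: ht_nFT)
next
  assume A: "length w = a + b \<and> dyw w \<and> ht w = int a - int b"
  then have l: "length w = a + b" and d: "dyw w" and h: "ht w = int a - int b" by auto
  have e: "nF w = a" "nT w = b" using h l nFT_len[of w] by (simp_all add: ht_nFT)
  show "pts w \<in> dyck_paths a b"
    unfolding dyck_paths_def
  proof (intro CollectI conjI allI impI)
    show "length (pts w) = a + b + 1" using l by (simp add: pts_def)
    show "pts w ! 0 = (0, 0)" by (simp add: pts_def del: upt_Suc)
    show "pts w ! (a + b) = (a, b)" using l e by (simp add: pts_def pt_def del: upt_Suc)
    fix i
    show "i < a + b \<Longrightarrow> pts w ! Suc i = (fst (pts w ! i) + 1, snd (pts w ! i)) \<or>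
          pts w ! Suc i = (fst (pts w ! i), snd (pts w ! i) + 1)"
      using l by (simp add: pts_def pt_Suc del: upt_Suc)
    show "i \<le> a + b \<Longrightarrow> snd (pts w ! i) \<le> fst (pts w ! i)"
      using l d by (simp add: pts_def dyw_def hk_pt del: upt_Suc)
  qed
qed

lemma wd_pts: "wd (pts w) = w"
  by (rule nth_equalityI) (auto simp: wd_def pts_def pt_Suc nth_append simp del: upt_Suc)

lemma pts_wd:
  assumes "v \<in> dyck_paths a b"
  shows "pts (wd v) = v"
proof -
  have l: "length v = a + b + 1" using assms by (simp add: dyck_paths_def)
  have lw: "length (wd v) = a + b" using l by (simp add: wd_def)
  have st: "\<And>i. i < a + b \<Longrightarrow> v ! Suc i = (fst (v ! i) + 1, snd (v ! i)) \<or>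
          v ! Suc i = (fst (v ! i), snd (v ! i) + 1)" using assms by (simp add: dyck_paths_def)
  have v0: "v ! 0 = (0,0)" using assms by (simp add: dyck_paths_def)
  have "k \<le> a + b \<Longrightarrow> pt (wd v) k = v ! k" for k
  proof (induction k)
    case 0 then show ?case using v0 by simp
  next
    case (Suc k)
    then have k: "k < a + b" by simp
    have wk: "wd v ! k = (snd (v ! Suc k) \<noteq> snd (v ! k))" using k l by (simp add: wd_def)
    show ?case using Suc k st[OF k] by (auto simp: pt_Suc lw wk)
  qed
  then show ?thesis using l lw
    by (intro nth_equalityI) (auto simp: pts_def simp del: upt_Suc)
qed

lemma returns_pts: "returns (pts w) = zr w"
proof -
  have "{i. 1 \<le> i \<and> i < length (pts w) \<and> fst (pts w ! i) = snd (pts w ! i)}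
      = {k. 1 \<le> k \<and> k \<le> length w \<and> hk w k = 0}"
    by (auto simp: pts_def hk_pt simp del: upt_Suc)
  then show ?thesis by (simp add: returns_def zr_def)
qed

lemma dyck_sum:
  "(\<Sum>v\<in>dyck_paths a b. [:1,1:] ^ returns v) = Rp (a+b) (int a - int b)"
  unfolding Rp_def
proof (rule sum.reindex_bij_witness[where i=pts and j=wd])
  fix v assume v: "v \<in> dyck_paths a b"
  show "pts (wd v) = v" using pts_wd[OF v] .
  show "wd v \<in> {w. length w = a + b \<and> dyw w \<and> ht w = int a - int b}"
    using v pts_dyck[of "wd v" a b] pts_wd[OF v] by simp
  show "[:1, 1:] ^ zr (wd v) = [:1, 1:] ^ returns v"
    using pts_wd[OF v] returns_pts[of "wd v"] by simp
next
  fix w assume w: "w \<in> {w. length w = a + b \<and> dyw w \<and> ht w = int a - int b}"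
  show "wd (pts w) = w" by (rule wd_pts)
  show "pts w \<in> dyck_paths a b" using w pts_dyck[of w a b] by simp
qed

lemma finite_dyck: "finite (dyck_paths a b)"
proof -
  have "dyck_paths a b \<subseteq> pts ` {w. length w = a + b \<and> dyw w \<and> ht w = int a - int b}"
  proof
    fix v assume v: "v \<in> dyck_paths a b"
    then have "wd v \<in> {w. length w = a + b \<and> dyw w \<and> ht w = int a - int b}"
      using pts_dyck[of "wd v" a b] pts_wd[OF v] by simp
    then show "v \<in> pts ` {w. length w = a + b \<and> dyw w \<and> ht w = int a - int b}"
      using pts_wd[OF v] by (intro image_eqI[where x="wd v"]) simp_all
  qed
  then show ?thesis by (rule finite_surj[OF fin_len])
qed

lemma returns_le: "v \<in> dyck_paths a b \<Longrightarrow> returns v \<le> a + b"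
proof -
  assume "v \<in> dyck_paths a b"
  then have "length v = a + b + 1" by (simp add: dyck_paths_def)
  then have "{i. 1 \<le> i \<and> i < length v \<and> fst (v ! i) = snd (v ! i)} \<subseteq> {1..a+b}" by auto
  then have "returns v \<le> card {1..a+b}" unfolding returns_def
    by (intro card_mono) auto
  then show ?thesis by simp
qed

lemma rhs_eq:
  "(\<Sum>i\<le>a+b. of_nat (card (D a b i)) * [:1, 1:] ^ i) = Rp (a+b) (int a - int b)"
proof -
  have "(\<Sum>i\<le>a+b. of_nat (card (D a b i)) * [:1, 1:] ^ i)
      = (\<Sum>i\<le>a+b. (\<Sum>v\<in>{v \<in> dyck_paths a b. returns v = i}. [:1,1:] ^ returns v :: int poly))"
    by (intro sum.cong refl) (simp add: D_def)
  also have "\<dots> = (\<Sum>v\<in>dyck_paths a b. [:1,1:] ^ returns v)"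
    by (rule sum.group) (auto simp: finite_dyck returns_le)
  finally show ?thesis using dyck_sum by simp
qed




lemma boxes_iff: "(r, j) \<in> boxes a b \<longleftrightarrow> (r = 0 \<and> j < a) \<or> (r = 1 \<and> j < b)"
  by (auto simp: boxes_def)

lemma finite_boxes: "finite (boxes a b)"
proof -
  have "boxes a b \<subseteq> {0,1} \<times> {..<a+b}" by (auto simp: boxes_def)
  then show ?thesis by (rule finite_subset) auto
qed

lemma down_closed:
  assumes "A \<subseteq> {..<n}" and "\<And>i i'. i \<in> A \<Longrightarrow> i' < i \<Longrightarrow> i' \<in> A"
  shows "A = {..<card A}"
proof (cases "A = {}")
  case True then show ?thesis by simp
next
  case False
  have fin: "finite A" using assms(1) finite_subset by blast
  define m where "m = Max A"
  have "m \<in> A" using fin False by (simp add: m_def)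
  have "A = {..m}"
  proof
    show "A \<subseteq> {..m}" using fin by (auto simp: m_def)
    show "{..m} \<subseteq> A" using assms(2) \<open>m \<in> A\<close> by (auto simp: le_less)
  qed
  then show ?thesis by (simp add: lessThan_Suc_atMost[symmetric])
qed

context
  fixes a b :: nat and \<tau> :: "nat \<times> nat \<Rightarrow> nat"
  assumes rs: "\<tau> \<in> row_standard a b" and ba: "b \<le> a"
begin

lemma rs_bij: "bij_betw \<tau> (boxes a b) {1..a+b}" using rs by (simp add: row_standard_def)
lemma rs_inj: "inj_on \<tau> (boxes a b)" using rs_bij by (simp add: bij_betw_def)
lemma rs_img: "\<tau> ` boxes a b = {1..a+b}" using rs_bij by (simp add: bij_betw_def)
lemma rs_zero: "c \<notin> boxes a b \<Longrightarrow> \<tau> c = 0" using rs by (cases c) (simp add: row_standard_def)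
lemma rs_suc: "(i, Suc j) \<in> boxes a b \<Longrightarrow> \<tau> (i, j) < \<tau> (i, Suc j)"
  using rs by (simp add: row_standard_def)

lemma rs_mono: "(i, j') \<in> boxes a b \<Longrightarrow> j < j' \<Longrightarrow> \<tau> (i, j) < \<tau> (i, j')"
proof (induction j')
  case 0 then show ?case by simp
next
  case (Suc j')
  have b: "(i, j') \<in> boxes a b" using Suc.prems(1) by (auto simp: boxes_iff)
  show ?case
  proof (cases "j = j'")
    case True then show ?thesis using rs_suc[OF Suc.prems(1)] by simp
  next
    case False
    then have "\<tau> (i, j) < \<tau> (i, j')" using Suc.IH[OF b] Suc.prems(2) by simp
    then show ?thesis using rs_suc[OF Suc.prems(1)] by simp
  qed
qed

lemma rs_val: "c \<in> boxes a b \<Longrightarrow> 1 \<le> \<tau> c \<and> \<tau> c \<le> a + b"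
  using rs_img by auto

lemma rs_ne: "c \<in> boxes a b \<Longrightarrow> c' \<in> boxes a b \<Longrightarrow> c \<noteq> c' \<Longrightarrow> \<tau> c \<noteq> \<tau> c'"
  using rs_inj by (auto simp: inj_on_def)

definition cT :: "nat \<Rightarrow> nat" where "cT K = card {i. i < a \<and> \<tau> (0, i) \<le> K}"
definition cB :: "nat \<Rightarrow> nat" where "cB K = card {i. i < b \<and> \<tau> (1, i) \<le> K}"

lemma cT_iff: "j < a \<Longrightarrow> j < cT K \<longleftrightarrow> \<tau> (0, j) \<le> K"
proof -
  assume j: "j < a"
  let ?S = "{i. i < a \<and> \<tau> (0, i) \<le> K}"
  have "?S = {..<card ?S}"
  proof (rule down_closed[where n=a])
    fix i i' assume "i \<in> ?S" "i' < i"
    then show "i' \<in> ?S" using rs_mono[of 0 i i'] by (auto simp: boxes_iff)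
  qed auto
  then have "j \<in> ?S \<longleftrightarrow> j < cT K" unfolding cT_def by (metis lessThan_iff)
  then show ?thesis using j by simp
qed

lemma cB_iff: "j < b \<Longrightarrow> j < cB K \<longleftrightarrow> \<tau> (1, j) \<le> K"
proof -
  assume j: "j < b"
  let ?S = "{i. i < b \<and> \<tau> (1, i) \<le> K}"
  have "?S = {..<card ?S}"
  proof (rule down_closed[where n=b])
    fix i i' assume "i \<in> ?S" "i' < i"
    then show "i' \<in> ?S" using rs_mono[of 1 i i'] by (auto simp: boxes_iff)
  qed auto
  then have "j \<in> ?S \<longleftrightarrow> j < cB K" unfolding cB_def by (metis lessThan_iff)
  then show ?thesis using j by simp
qed

lemma cTB: "K \<le> a + b \<Longrightarrow> cT K + cB K = K"
proof -
  assume K: "K \<le> a + b"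
  have "card {c \<in> boxes a b. \<tau> c \<le> K} = card {1..K}"
  proof (rule bij_betw_same_card)
    show "bij_betw \<tau> {c \<in> boxes a b. \<tau> c \<le> K} {1..K}"
      unfolding bij_betw_def
    proof
      show "inj_on \<tau> {c \<in> boxes a b. \<tau> c \<le> K}" using rs_inj by (rule inj_on_subset) auto
      show "\<tau> ` {c \<in> boxes a b. \<tau> c \<le> K} = {1..K}"
      proof
        show "\<tau> ` {c \<in> boxes a b. \<tau> c \<le> K} \<subseteq> {1..K}" using rs_val by auto
        show "{1..K} \<subseteq> \<tau> ` {c \<in> boxes a b. \<tau> c \<le> K}"
        proof
          fix x assume x: "x \<in> {1..K}"
          then have "x \<in> \<tau> ` boxes a b" using K rs_img by auto
          then obtain c where "c \<in> boxes a b" "x = \<tau> c" by blast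
          then show "x \<in> \<tau> ` {c \<in> boxes a b. \<tau> c \<le> K}" using x by auto
        qed
      qed
    qed
  qed
  moreover have "{c \<in> boxes a b. \<tau> c \<le> K} =
      (\<lambda>i. (0, i)) ` {i. i < a \<and> \<tau> (0, i) \<le> K} \<union> (\<lambda>i. (1, i)) ` {i. i < b \<and> \<tau> (1, i) \<le> K}"
    by (auto simp: boxes_def)
  moreover have "card ((\<lambda>i. (0::nat, i)) ` {i. i < a \<and> \<tau> (0, i) \<le> K} \<union> (\<lambda>i. (1, i)) ` {i. i < b \<and> \<tau> (1, i) \<le> K})
     = cT K + cB K"
    unfolding cT_def cB_def
    by (subst card_Un_disjoint) (auto simp: card_image inj_on_def)
  ultimately show ?thesis by simp
qed

lemma sign_col: "j < b \<Longrightarrow> \<tau> (0, j) < \<tau> (1, j) \<longleftrightarrow> 2 * j + 1 < \<tau> (1, j)"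
proof -
  assume j: "j < b"
  then have ja: "j < a" using ba by simp
  let ?K = "2 * j + 1"
  have K: "?K \<le> a + b" using j ba by simp
  show ?thesis
  proof
    assume lt: "\<tau> (0, j) < \<tau> (1, j)"
    show "?K < \<tau> (1, j)"
    proof (rule ccontr)
      assume "\<not> ?K < \<tau> (1, j)"
      then have "j < cB ?K" "j < cT ?K" using cB_iff[OF j] cT_iff[OF ja] lt by auto
      then show False using cTB[OF K] by simp
    qed
  next
    assume gt: "?K < \<tau> (1, j)"
    show "\<tau> (0, j) < \<tau> (1, j)"
    proof (rule ccontr)
      assume "\<not> \<tau> (0, j) < \<tau> (1, j)"
      then have "\<not> j < cB ?K" "\<not> j < cT ?K" using cB_iff[OF j] cT_iff[OF ja] gt by auto
      then show False using cTB[OF K] by simp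
    qed
  qed
qed

end



context
  fixes a b :: nat and \<tau> :: "nat \<times> nat \<Rightarrow> nat"
  assumes rs: "\<tau> \<in> row_standard a b" and ba: "b \<le> a"
begin

definition colsg :: "nat \<Rightarrow> bool" where "colsg j = (\<tau> (0, j) < \<tau> (1, j))"

lemma least1:
  assumes c: "c \<in> boxes a b" and c': "c' \<in> boxes a b" and ne: "c \<noteq> c'" and col: "snd c = snd c'"
  shows "(LEAST r. 1 \<le> r \<and> (shiftr c r \<notin> boxes a b \<or> shiftr c' r \<notin> boxes a b
                    \<or> \<tau> (shiftr c r) \<noteq> \<tau> (shiftr c' r))) = 1"
proof (rule Least_equality)
  have "shiftr c 1 \<noteq> shiftr c' 1" using ne col by (cases c, cases c') (auto simp: shiftr_def)
  then show "1 \<le> (1::nat) \<and> (shiftr c 1 \<notin> boxes a b \<or> shiftr c' 1 \<notin> boxes a b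
                    \<or> \<tau> (shiftr c 1) \<noteq> \<tau> (shiftr c' 1))"
    using rs_ne[OF rs ba] by blast
qed simp

lemma inv_pair_cases:
  assumes "is_inversion_pair a b \<tau> c c'"
  shows "\<exists>j<b. (c = (0,j) \<and> c' = (1,j)) \<or> (c = (1,j) \<and> c' = (0,j))"
proof -
  obtain r j r' j' where cc: "c = (r,j)" "c' = (r',j')" by (cases c, cases c')
  have "c \<in> boxes a b" "c' \<in> boxes a b" "c \<noteq> c'" "snd c = snd c'"
    using assms by (auto simp: is_inversion_pair_def)
  then show ?thesis using cc by (auto simp: boxes_iff)
qed

lemma inv01: "j < b \<Longrightarrow> is_inversion_pair a b \<tau> (0,j) (1,j) \<longleftrightarrow> colsg j \<and> Suc j < b \<and> \<not> colsg (Suc j)"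
proof -
  assume j: "j < b"
  have bx: "(0,j) \<in> boxes a b" "(1,j) \<in> boxes a b" using j ba by (auto simp: boxes_iff)
  have L: "(LEAST r. 1 \<le> r \<and> (shiftr (0,j) r \<notin> boxes a b \<or> shiftr (1,j) r \<notin> boxes a b
                    \<or> \<tau> (shiftr (0,j) r) \<noteq> \<tau> (shiftr (1,j) r))) = 1"
    by (rule least1) (use bx in auto)
  have ne: "Suc j < b \<Longrightarrow> \<tau> (0, Suc j) \<noteq> \<tau> (1, Suc j)"
    using rs_ne[OF rs ba, of "(0, Suc j)" "(1, Suc j)"] ba by (auto simp: boxes_iff)
  show ?thesis
    unfolding is_inversion_pair_def L Let_def using bx ba ne
    by (auto simp: shiftr_def boxes_iff colsg_def)
qed

lemma inv10: "j < b \<Longrightarrow> is_inversion_pair a b \<tau> (1,j) (0,j) \<longleftrightarrow>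
     \<not> colsg j \<and> (Suc j = b \<or> (Suc j < b \<and> colsg (Suc j)))"
proof -
  assume j: "j < b"
  have bx: "(0,j) \<in> boxes a b" "(1,j) \<in> boxes a b" using j ba by (auto simp: boxes_iff)
  have L: "(LEAST r. 1 \<le> r \<and> (shiftr (1,j) r \<notin> boxes a b \<or> shiftr (0,j) r \<notin> boxes a b
                    \<or> \<tau> (shiftr (1,j) r) \<noteq> \<tau> (shiftr (0,j) r))) = 1"
    by (rule least1) (use bx in auto)
  have ne: "\<tau> (0, j) \<noteq> \<tau> (1, j)"
    using rs_ne[OF rs ba, of "(0, j)" "(1, j)"] bx by auto
  have ne2: "Suc j < b \<Longrightarrow> \<tau> (0, Suc j) \<noteq> \<tau> (1, Suc j)"
    using rs_ne[OF rs ba, of "(0, Suc j)" "(1, Suc j)"] ba by (auto simp: boxes_iff)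
  show ?thesis
    unfolding is_inversion_pair_def L Let_def using bx ba ne ne2 j
    by (auto simp: shiftr_def boxes_iff colsg_def)
qed

definition Jt :: "nat set" where
  "Jt = {j. j < b \<and> ((Suc j < b \<and> colsg j \<noteq> colsg (Suc j)) \<or> (Suc j = b \<and> \<not> colsg j))}"

lemma num_inv_Jt: "num_inversions a b \<tau> = card Jt"
proof -
  define pr where "pr j = (if colsg j then ((0::nat,j),(1::nat,j)) else ((1,j),(0,j)))" for j
  have "{(c, c'). is_inversion_pair a b \<tau> c c'} = pr ` Jt"
  proof
    show "{(c, c'). is_inversion_pair a b \<tau> c c'} \<subseteq> pr ` Jt"
    proof clarify
      fix c c' assume ip: "is_inversion_pair a b \<tau> c c'"
      obtain j where j: "j < b" and cs: "(c = (0,j) \<and> c' = (1,j)) \<or> (c = (1,j) \<and> c' = (0,j))"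
        using inv_pair_cases[OF ip] by blast
      from cs show "(c, c') \<in> pr ` Jt"
      proof (elim disjE)
        assume "c = (0,j) \<and> c' = (1,j)"
        then show ?thesis using ip inv01[OF j] j
          by (intro image_eqI[where x=j]) (auto simp: pr_def Jt_def)
      next
        assume "c = (1,j) \<and> c' = (0,j)"
        then show ?thesis using ip inv10[OF j] j
          by (intro image_eqI[where x=j]) (auto simp: pr_def Jt_def)
      qed
    qed
  next
    show "pr ` Jt \<subseteq> {(c, c'). is_inversion_pair a b \<tau> c c'}"
    proof
      fix p assume "p \<in> pr ` Jt"
      then obtain j where j: "j \<in> Jt" and p: "p = pr j" by blast
      then have jb: "j < b" by (simp add: Jt_def)
      show "p \<in> {(c, c'). is_inversion_pair a b \<tau> c c'}"
      proof (cases "colsg j")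
        case True
        then show ?thesis using p j inv01[OF jb] by (auto simp: pr_def Jt_def)
      next
        case False
        then show ?thesis using p j inv10[OF jb] by (auto simp: pr_def Jt_def)
      qed
    qed
  qed
  moreover have "inj_on pr Jt" by (auto simp: inj_on_def pr_def split: if_splits)
  ultimately show ?thesis unfolding num_inversions_def by (simp add: card_image)
qed

definition tw :: "bool list" where
  "tw = map (\<lambda>i. Suc i \<in> \<tau> ` ({1} \<times> {..<b})) [0..<a+b]"

lemma length_tw: "length tw = a + b" by (simp add: tw_def)

lemma nT_take_tw: "K \<le> a + b \<Longrightarrow> nT (take K tw) = cB b \<tau> K"
proof -
  assume K: "K \<le> a + b"
  have "nT (take K tw) = card {i. i < K \<and> Suc i \<in> \<tau> ` ({1} \<times> {..<b})}"
  proof -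
    have "\<And>i. i < K \<Longrightarrow> take K tw ! i = (Suc i \<in> \<tau> ` ({1} \<times> {..<b}))"
      using K by (simp add: tw_def)
    then show ?thesis unfolding nT_def length_filter_conv_card using K length_tw
      by (intro arg_cong[where f=card]) auto
  qed
  also have "\<dots> = card {j. j < b \<and> \<tau> (1, j) \<le> K}"
  proof (rule bij_betw_same_card[symmetric, where f="\<lambda>j. \<tau> (1,j) - 1"])
    have v: "j < b \<Longrightarrow> 1 \<le> \<tau> (1, j)" for j using rs_val[OF rs ba, of "(1,j)"] by (simp add: boxes_iff)
    show "bij_betw (\<lambda>j. \<tau> (1, j) - 1) {j. j < b \<and> \<tau> (1, j) \<le> K}
        {i. i < K \<and> Suc i \<in> \<tau> ` ({1} \<times> {..<b})}"
      unfolding bij_betw_def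
    proof
      show "inj_on (\<lambda>j. \<tau> (1, j) - 1) {j. j < b \<and> \<tau> (1, j) \<le> K}"
      proof (rule inj_onI)
        fix x y assume x: "x \<in> {j. j < b \<and> \<tau> (1, j) \<le> K}" and y: "y \<in> {j. j < b \<and> \<tau> (1, j) \<le> K}"
          and e: "\<tau> (1, x) - 1 = \<tau> (1, y) - 1"
        have "1 \<le> \<tau> (1,x)" "1 \<le> \<tau> (1,y)" using v x y by auto
        then have "\<tau> (1,x) = \<tau> (1,y)" using e by arith
        moreover have "(1,x) \<in> boxes a b" "(1,y) \<in> boxes a b" using x y by (auto simp: boxes_iff)
        ultimately show "x = y" using inj_onD[OF rs_inj[OF rs ba]] by blast
      qed
      show "(\<lambda>j. \<tau> (1, j) - 1) ` {j. j < b \<and> \<tau> (1, j) \<le> K} = {i. i < K \<and> Suc i \<in> \<tau> ` ({1} \<times> {..<b})}"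
      proof
        show "(\<lambda>j. \<tau> (1, j) - 1) ` {j. j < b \<and> \<tau> (1, j) \<le> K} \<subseteq> {i. i < K \<and> Suc i \<in> \<tau> ` ({1} \<times> {..<b})}"
        proof clarify
          fix j assume j: "j < b" "\<tau> (1, j) \<le> K"
          have "Suc (\<tau> (1, j) - 1) = \<tau> (1, j)" using v[OF j(1)] by simp
          then show "\<tau> (1, j) - 1 < K \<and> Suc (\<tau> (1, j) - 1) \<in> \<tau> ` ({1} \<times> {..<b})"
            using j v[OF j(1)] by auto
        qed
        show "{i. i < K \<and> Suc i \<in> \<tau> ` ({1} \<times> {..<b})} \<subseteq> (\<lambda>j. \<tau> (1, j) - 1) ` {j. j < b \<and> \<tau> (1, j) \<le> K}"
        proof
          fix i assume "i \<in> {i. i < K \<and> Suc i \<in> \<tau> ` ({1} \<times> {..<b})}"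
          then obtain j where "j < b" "Suc i = \<tau> (1,j)" "i < K" by auto
          then show "i \<in> (\<lambda>j. \<tau> (1, j) - 1) ` {j. j < b \<and> \<tau> (1, j) \<le> K}"
            by (intro image_eqI[where x=j]) auto
        qed
      qed
    qed
  qed
  finally show ?thesis by (simp add: cB_def[OF rs ba])
qed

lemma hk_tw: "K \<le> a + b \<Longrightarrow> hk tw K = int K - 2 * int (cB b \<tau> K)"
proof -
  assume K: "K \<le> a + b"
  have "hk tw K = int (nF (take K tw)) - int (nT (take K tw))" by (simp add: hk_def ht_nFT)
  moreover have "nF (take K tw) + nT (take K tw) = K" using nFT_len[of "take K tw"] K length_tw by simp
  ultimately show ?thesis using nT_take_tw[OF K] by simp
qed

lemma colsg_hk: "j < b \<Longrightarrow> colsg j \<longleftrightarrow> 0 < hk tw (2 * j + 1)"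
proof -
  assume j: "j < b"
  have K: "2 * j + 1 \<le> a + b" using j ba by simp
  have "colsg j \<longleftrightarrow> 2 * j + 1 < \<tau> (1, j)" using sign_col[OF rs ba j] by (simp add: colsg_def)
  also have "\<dots> \<longleftrightarrow> \<not> j < cB b \<tau> (2 * j + 1)" using cB_iff[OF rs ba j] by auto
  also have "\<dots> \<longleftrightarrow> 0 < hk tw (2 * j + 1)" using hk_tw[OF K] by auto
  finally show ?thesis .
qed

end



lemma nT_take_Suc: "k < length w \<Longrightarrow> nT (take (Suc k) w) = nT (take k w) + (if w ! k then 1 else 0)"
  by (simp add: nT_def take_Suc_conv_app_nth)

lemma nT_take_le: "nT (take k w) \<le> nT w"
proof -
  have "nT w = nT (take k w) + nT (drop k w)"
    unfolding nT_def by (metis append_take_drop_id filter_append length_append)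
  then show ?thesis by simp
qed

lemma nT_take_le_k: "nT (take k w) \<le> k"
  unfolding nT_def by (metis length_filter_le length_take min.bounded_iff nle_le)

lemma hk_T: "k \<le> length w \<Longrightarrow> hk w k = int k - 2 * int (nT (take k w))"
proof -
  assume k: "k \<le> length w"
  have "nF (take k w) + nT (take k w) = k" using nFT_len[of "take k w"] k by simp
  then show ?thesis by (simp add: hk_def ht_nFT)
qed

context
  fixes w :: "bool list" and a b :: nat
  assumes lw: "length w = a + b" and tw: "nT w = b" and ba: "b \<le> a"
begin

definition t :: "nat \<Rightarrow> nat" where "t k = nT (take k w)"

lemma hkt: "k \<le> a + b \<Longrightarrow> hk w k = int k - 2 * int (t k)"
  using hk_T[of k w] lw by (simp add: t_def)

lemma tS: "k < a + b \<Longrightarrow> t (Suc k) = t k \<or> t (Suc k) = Suc (t k)"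
  using nT_take_Suc[of k w] lw by (simp add: t_def)

lemma tb: "t k \<le> b" using nT_take_le[of k w] tw by (simp add: t_def)

definition Jw :: "nat set" where
  "Jw = {j. j < b \<and> ((Suc j < b \<and> (0 < hk w (2*j+1)) \<noteq> (0 < hk w (2*j+3)))
                    \<or> (Suc j = b \<and> \<not> 0 < hk w (2*j+1)))}"

definition Kw :: "nat set" where
  "Kw = {k. 1 \<le> k \<and> k \<le> length w \<and> hk w k = 0 \<and> sd w k \<noteq> nx w False k}"

lemma J_to_K: "j \<in> Jw \<Longrightarrow> 2 * j + 2 \<in> Kw"
proof -
  assume j: "j \<in> Jw"
  then have jb: "j < b" by (simp add: Jw_def)
  have k1: "2*j+1 < a + b" "2*j+2 \<le> a + b" using jb ba by auto
  have h1: "hk w (2*j+1) = int (2*j+1) - 2 * int (t (2*j+1))" using hkt k1 by simp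
  have h2: "hk w (2*j+2) = int (2*j+2) - 2 * int (t (2*j+2))" using hkt k1 by simp
  have s12: "t (2*j+2) = t (2*j+1) \<or> t (2*j+2) = Suc (t (2*j+1))" using tS[of "2*j+1"] k1 by simp
  have tb2: "t (2*j+2) \<le> b" by (rule tb)
  have sdk: "sd w (2*j+2) = (hk w (2*j+1) < 0)"
  proof -
    have e: "2*j+2-1 = 2*j+1" by simp
    show ?thesis unfolding sd_def e h1 h2 using s12 by (auto; presburger)
  qed
  show ?thesis
  proof (cases "Suc j < b")
    case True
    then have k3: "2*j+3 \<le> a + b" "2*j+2 < a + b" using ba by auto
    have h3: "hk w (2*j+3) = int (2*j+3) - 2 * int (t (2*j+3))" using hkt k3 by simp
    have s23: "t (2*j+3) = t (2*j+2) \<or> t (2*j+3) = Suc (t (2*j+2))" using tS[of "2*j+2"] k3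
      by (simp add: numeral_3_eq_3)
    have g: "(0 < hk w (2*j+1)) \<noteq> (0 < hk w (2*j+3))" using j True by (simp add: Jw_def)
    have z: "hk w (2*j+2) = 0" using g h1 h2 h3 s12 s23 by (auto; presburger)
    have nxk: "nx w False (2*j+2) = (hk w (2*j+3) < 0)"
      using k3 lw z by (simp add: nx_def sd_def numeral_3_eq_3)
    have o1: "hk w (2*j+1) \<noteq> 0" using h1 by presburger
    have o3: "hk w (2*j+3) \<noteq> 0" using h3 by presburger
    show ?thesis unfolding Kw_def using z sdk nxk g k1 lw o1 o3 by auto
  next
    case False
    then have jb': "Suc j = b" using jb by simp
    have g: "\<not> 0 < hk w (2*j+1)" using j jb' by (simp add: Jw_def)
    have z: "hk w (2*j+2) = 0" using g h1 h2 s12 tb2 jb' by (auto; presburger)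
    have nxk: "\<not> nx w False (2*j+2)"
    proof (cases "2*j+2 < a + b")
      case True
      have h3: "hk w (2*j+3) = int (2*j+3) - 2 * int (t (2*j+3))" using hkt True by simp
      have "t (2*j+3) \<le> b" by (rule tb)
      then have "0 < hk w (2*j+3)" using h3 jb' by simp
      then show ?thesis using True lw z by (simp add: nx_def sd_def numeral_3_eq_3)
    next
      case False
      then show ?thesis using lw by (simp add: nx_def)
    qed
    have o1: "hk w (2*j+1) \<noteq> 0" using h1 by presburger
    show ?thesis unfolding Kw_def using z sdk nxk g k1 lw o1 by auto
  qed
qed

lemma K_to_J: "k \<in> Kw \<Longrightarrow> \<exists>j \<in> Jw. k = 2 * j + 2"
proof -
  assume k: "k \<in> Kw"
  then have k1: "1 \<le> k" "k \<le> a + b" and z: "hk w k = 0" and ne: "sd w k \<noteq> nx w False k"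
    using lw by (auto simp: Kw_def)
  have hk_k: "hk w k = int k - 2 * int (t k)" using hkt k1 by simp
  then have kt: "k = 2 * t k" using z by simp
  define j where "j = t k - 1"
  have tk1: "1 \<le> t k" using kt k1 by simp
  have kj: "k = 2 * j + 2" using kt tk1 by (simp add: j_def)
  have jb: "j < b" using tb[of k] tk1 by (simp add: j_def)
  have km: "2*j+1 < a + b" using kj k1 by simp
  have h1: "hk w (2*j+1) = int (2*j+1) - 2 * int (t (2*j+1))" using hkt km by simp
  have s12: "t (2*j+2) = t (2*j+1) \<or> t (2*j+2) = Suc (t (2*j+1))" using tS[of "2*j+1"] km by simp
  have h1v: "hk w (2*j+1) = 1 \<or> hk w (2*j+1) = -1" using h1 s12 z kj hk_k by (auto; presburger)
  have sdk: "sd w k = (hk w (2*j+1) < 0)" using z kj by (simp add: sd_def)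
  show ?thesis
  proof (intro bexI[where x=j] kj)
    show "j \<in> Jw"
    proof (cases "Suc j < b")
      case True
      then have k3: "2*j+3 \<le> a + b" "k < a + b" using ba kj by auto
      have h3: "hk w (2*j+3) = int (2*j+3) - 2 * int (t (2*j+3))" using hkt k3 by simp
      have s23: "t (2*j+3) = t (2*j+2) \<or> t (2*j+3) = Suc (t (2*j+2))" using tS[of "2*j+2"] k3 kj
        by (simp add: numeral_3_eq_3)
      have h3v: "hk w (2*j+3) = 1 \<or> hk w (2*j+3) = -1" using h3 s23 z kj hk_k by (auto; presburger)
      have nxk: "nx w False k = (hk w (2*j+3) < 0)"
        using k3 lw z kj by (simp add: nx_def sd_def numeral_3_eq_3)
      show ?thesis using ne sdk nxk h1v h3v jb True by (auto simp: Jw_def)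
    next
      case False
      then have jb': "Suc j = b" using jb by simp
      have nxk: "\<not> nx w False k"
      proof (cases "k < a + b")
        case True
        have h3: "hk w (2*j+3) = int (2*j+3) - 2 * int (t (2*j+3))" using hkt True kj by simp
        have "t (2*j+3) \<le> b" by (rule tb)
        then have "0 < hk w (2*j+3)" using h3 jb' by simp
        then show ?thesis using True lw z kj by (simp add: nx_def sd_def numeral_3_eq_3)
      next
        case False
        then show ?thesis using lw by (simp add: nx_def)
      qed
      show ?thesis using ne sdk nxk h1v jb jb' by (auto simp: Jw_def)
    qed
  qed
qed

lemma cr_Jw: "cr w False = card Jw"
proof -
  have "Kw = (\<lambda>j. 2 * j + 2) ` Jw"
    using J_to_K K_to_J by blast
  moreover have "inj_on (\<lambda>j::nat. 2 * j + 2) Jw" by (auto simp: inj_on_def)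
  moreover have "cr w False = card Kw" by (simp add: cr_def Kw_def)
  ultimately show ?thesis by (simp add: card_image)
qed

end



definition TopS :: "bool list \<Rightarrow> nat set" where "TopS w = Suc ` {i. i < length w \<and> \<not> w ! i}"
definition BotS :: "bool list \<Rightarrow> nat set" where "BotS w = Suc ` {i. i < length w \<and> w ! i}"

definition fill :: "bool list \<Rightarrow> nat \<times> nat \<Rightarrow> nat" where
  "fill w c = (if fst c = 0 \<and> snd c < nF w then sorted_list_of_set (TopS w) ! snd c
      else if fst c = 1 \<and> snd c < nT w then sorted_list_of_set (BotS w) ! snd c else 0)"

lemma card_TopS: "card (TopS w) = nF w"
  unfolding TopS_def nF_def length_filter_conv_card by (simp add: card_image)

lemma card_BotS: "card (BotS w) = nT w"
  unfolding BotS_def nT_def length_filter_conv_card by (simp add: card_image)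

lemma fin_TopS: "finite (TopS w)" by (simp add: TopS_def)
lemma fin_BotS: "finite (BotS w)" by (simp add: BotS_def)

lemma TB_disj: "TopS w \<inter> BotS w = {}" by (auto simp: TopS_def BotS_def)
lemma TB_un: "TopS w \<union> BotS w = {1..length w}"
proof -
  have "TopS w \<union> BotS w = Suc ` {..<length w}" by (auto simp: TopS_def BotS_def)
  also have "\<dots> = {1..length w}" by (simp add: image_Suc_lessThan)
  finally show ?thesis .
qed

context
  fixes a b :: nat
  assumes ba: "b \<le> a"
begin

definition Wset :: "bool list set" where "Wset = {w. length w = a + b \<and> ht w = int a - int b}"

lemma W_counts: "w \<in> Wset \<Longrightarrow> nF w = a \<and> nT w = b"
  using nFT_len[of w] ht_nFT[of w] by (auto simp: Wset_def)

lemma fill_rs: "w \<in> Wset \<Longrightarrow> fill w \<in> row_standard a b"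
proof -
  assume w: "w \<in> Wset"
  have c: "nF w = a" "nT w = b" using W_counts[OF w] by auto
  define xs where "xs = sorted_list_of_set (TopS w)"
  define ys where "ys = sorted_list_of_set (BotS w)"
  have lx: "length xs = a" using c card_TopS by (simp add: xs_def)
  have ly: "length ys = b" using c card_BotS by (simp add: ys_def)
  have sx: "set xs = TopS w" by (simp add: xs_def fin_TopS)
  have sy: "set ys = BotS w" by (simp add: ys_def fin_BotS)
  have dx: "distinct xs" "distinct ys" by (simp_all add: xs_def ys_def)
  have stx: "sorted_wrt (<) xs" "sorted_wrt (<) ys" by (simp_all add: xs_def ys_def strict_sorted_list_of_set)
  have f0: "j < a \<Longrightarrow> fill w (0, j) = xs ! j" for j using c by (simp add: fill_def xs_def)
  have f1: "j < b \<Longrightarrow> fill w (1, j) = ys ! j" for j using c by (simp add: fill_def ys_def)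
  have fz: "c \<notin> boxes a b \<Longrightarrow> fill w c = 0" for c using c by (cases c) (auto simp: fill_def boxes_iff)
  have bx: "boxes a b = (\<lambda>j. (0,j)) ` {..<a} \<union> (\<lambda>j. (1,j)) ` {..<b}" by (auto simp: boxes_def)
  have img: "fill w ` boxes a b = {1..a+b}"
  proof -
    have "fill w ` boxes a b = (\<lambda>j. xs ! j) ` {..<a} \<union> (\<lambda>j. ys ! j) ` {..<b}"
      unfolding bx image_Un image_image using f0 f1 by (auto intro!: image_cong)
    also have "\<dots> = set xs \<union> set ys" using lx ly by (auto simp: set_conv_nth)
    also have "\<dots> = {1..a+b}" using sx sy TB_un[of w] w by (simp add: Wset_def)
    finally show ?thesis .
  qed
  have inj: "inj_on (fill w) (boxes a b)"
  proof (rule inj_onI)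
    fix c c' assume cb: "c \<in> boxes a b" and cb': "c' \<in> boxes a b" and e: "fill w c = fill w c'"
    obtain r j r' j' where cc: "c = (r,j)" "c' = (r',j')" by (cases c, cases c')
    have inx: "j < a \<Longrightarrow> xs ! j \<in> TopS w" for j using sx lx by (metis nth_mem)
    have iny: "j < b \<Longrightarrow> ys ! j \<in> BotS w" for j using sy ly by (metis nth_mem)
    have "r = r'"
    proof (rule ccontr)
      assume "r \<noteq> r'"
      then have "fill w c \<in> TopS w \<and> fill w c' \<in> BotS w \<or> fill w c \<in> BotS w \<and> fill w c' \<in> TopS w"
        using cb cb' cc inx iny f0 f1 by (auto simp: boxes_iff)
      then show False using e TB_disj[of w] by auto
    qed
    then show "c = c'"
      using cb cb' e cc f0 f1 nth_eq_iff_index_eq[OF dx(1)] nth_eq_iff_index_eq[OF dx(2)] lx ly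
      by (auto simp: boxes_iff)
  qed
  have mono: "(i, Suc j) \<in> boxes a b \<Longrightarrow> fill w (i, j) < fill w (i, Suc j)" for i j
    using f0 f1 sorted_wrt_nth_less[OF stx(1)] sorted_wrt_nth_less[OF stx(2)] lx ly
    by (auto simp: boxes_iff)
  show ?thesis unfolding row_standard_def
    using img inj fz mono by (auto simp: bij_betw_def)
qed

lemma tw_fill: "w \<in> Wset \<Longrightarrow> tw a b (fill w) = w"
proof -
  assume w: "w \<in> Wset"
  have rs: "fill w \<in> row_standard a b" by (rule fill_rs[OF w])
  have c: "nF w = a" "nT w = b" using W_counts[OF w] by auto
  have lw: "length w = a + b" using w by (simp add: Wset_def)
  have "fill w ` ({1} \<times> {..<b}) = set (sorted_list_of_set (BotS w))"
  proof -
    have "fill w ` ({1} \<times> {..<b}) = (\<lambda>j. fill w (1,j)) ` {..<b}" by auto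
    also have "\<dots> = (\<lambda>j. sorted_list_of_set (BotS w) ! j) ` {..<b}"
      using c by (intro image_cong) (auto simp: fill_def)
    also have "\<dots> = set (sorted_list_of_set (BotS w))"
      using c card_BotS[of w] by (auto simp: set_conv_nth)
    finally show ?thesis .
  qed
  also have "\<dots> = BotS w" by (simp add: fin_BotS)
  finally have B: "fill w ` ({1} \<times> {..<b}) = BotS w" .
  show ?thesis
    unfolding tw_def[OF rs ba] B using lw
    by (intro nth_equalityI) (auto simp: BotS_def)
qed

end

context
  fixes a b :: nat and \<tau> :: "nat \<times> nat \<Rightarrow> nat"
  assumes rs: "\<tau> \<in> row_standard a b" and ba: "b \<le> a"
begin

lemma nT_tw: "nT (tw a b \<tau>) = b"
proof -
  have "nT (take (a+b) (tw a b \<tau>)) = cB b \<tau> (a+b)" by (rule nT_take_tw[OF rs ba]) simp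
  moreover have "take (a+b) (tw a b \<tau>) = tw a b \<tau>" using length_tw[OF rs ba] by simp
  moreover have "cB b \<tau> (a+b) = b"
  proof -
    have "{i. i < b \<and> \<tau> (1, i) \<le> a + b} = {..<b}"
      using rs_val[OF rs ba] by (auto simp: boxes_iff)
    then show ?thesis by (simp add: cB_def[OF rs ba])
  qed
  ultimately show ?thesis by simp
qed

lemma tw_W: "tw a b \<tau> \<in> Wset a b"
proof -
  have l: "length (tw a b \<tau>) = a + b" by (rule length_tw[OF rs ba])
  have "nF (tw a b \<tau>) = a" using nFT_len[of "tw a b \<tau>"] l nT_tw by simp
  then show ?thesis using l nT_tw by (simp add: Wset_def[OF ba] ht_nFT)
qed

lemma inv_cr: "num_inversions a b \<tau> = cr (tw a b \<tau>) False"
proof -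
  have l: "length (tw a b \<tau>) = a + b" by (rule length_tw[OF rs ba])
  have "Jt b \<tau> = Jw (tw a b \<tau>) b"
    unfolding Jt_def[OF rs ba] Jw_def[OF l nT_tw ba]
    using colsg_hk[OF rs ba] by (auto simp: numeral_3_eq_3)
  then show ?thesis using num_inv_Jt[OF rs ba] cr_Jw[OF l nT_tw ba] by simp
qed

lemma fill_tw: "fill (tw a b \<tau>) = \<tau>"
proof
  fix c :: "nat \<times> nat"
  let ?w = "tw a b \<tau>"
  have l: "length ?w = a + b" by (rule length_tw[OF rs ba])
  have nF: "nF ?w = a" using nFT_len[of ?w] l nT_tw by simp
  have B: "BotS ?w = \<tau> ` ({1} \<times> {..<b})"
  proof
    show "BotS ?w \<subseteq> \<tau> ` ({1} \<times> {..<b})"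
      using l by (auto simp: BotS_def tw_def[OF rs ba])
    show "\<tau> ` ({1} \<times> {..<b}) \<subseteq> BotS ?w"
    proof
      fix x assume x: "x \<in> \<tau> ` ({1} \<times> {..<b})"
      then obtain j where j: "j < b" "x = \<tau> (1, j)" by auto
      then have "1 \<le> x" "x \<le> a + b" using rs_val[OF rs ba, of "(1,j)"] by (auto simp: boxes_iff)
      then have "x = Suc (x - 1)" "x - 1 < a + b" by auto
      then show "x \<in> BotS ?w" using x l unfolding BotS_def tw_def[OF rs ba]
        by (intro image_eqI[where x="x-1"]) auto
    qed
  qed
  have T: "TopS ?w = \<tau> ` ({0} \<times> {..<a})"
  proof -
    have "TopS ?w = {1..a+b} - BotS ?w" using TB_un[of ?w] TB_disj[of ?w] l by auto
    also have "{1..a+b} = \<tau> ` ({0} \<times> {..<a}) \<union> \<tau> ` ({1} \<times> {..<b})"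
      using rs_img[OF rs ba] by (auto simp: boxes_def)
    also have "\<tau> ` ({0} \<times> {..<a}) \<inter> \<tau> ` ({1} \<times> {..<b}) = {}"
    proof -
      have "\<And>j j'. j < a \<Longrightarrow> j' < b \<Longrightarrow> \<tau> (0,j) \<noteq> \<tau> (1,j')"
        by (rule rs_ne[OF rs ba]) (auto simp: boxes_iff)
      then show ?thesis by auto
    qed
    ultimately show ?thesis using B by auto
  qed
  have sx: "sorted_list_of_set (TopS ?w) = map (\<lambda>j. \<tau> (0,j)) [0..<a]"
  proof -
    have st: "sorted_wrt (<) (map (\<lambda>j. \<tau> (0,j)) [0..<a])"
      unfolding sorted_wrt_iff_nth_less using rs_mono[OF rs ba] by (auto simp: boxes_iff)
    have cd: "card (TopS ?w) = a" using card_TopS nF by simp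
    have "set (map (\<lambda>j. \<tau> (0,j)) [0..<a]) = TopS ?w" using T by auto
    then show ?thesis using st cd fin_TopS[of ?w]
      using sorted_list_of_set_unique[of "TopS ?w" "map (\<lambda>j. \<tau> (0,j)) [0..<a]"] by simp
  qed
  have sy: "sorted_list_of_set (BotS ?w) = map (\<lambda>j. \<tau> (1,j)) [0..<b]"
  proof -
    have st: "sorted_wrt (<) (map (\<lambda>j. \<tau> (1,j)) [0..<b])"
      unfolding sorted_wrt_iff_nth_less using rs_mono[OF rs ba] by (auto simp: boxes_iff)
    have cd: "card (BotS ?w) = b" using card_BotS nT_tw by simp
    have "set (map (\<lambda>j. \<tau> (1,j)) [0..<b]) = BotS ?w" using B by auto
    then show ?thesis using st cd fin_BotS[of ?w]
      using sorted_list_of_set_unique[of "BotS ?w" "map (\<lambda>j. \<tau> (1,j)) [0..<b]"] by simp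
  qed
  obtain r j where cc: "c = (r, j)" by (cases c)
  show "fill ?w c = \<tau> c"
    using cc nF nT_tw sx sy rs_zero[OF rs ba, of c] ba by (auto simp: fill_def boxes_iff)
qed

end




lemma lhs_eq:
  assumes ba: "b \<le> a"
  shows "(\<Sum>k\<le>a+b. of_nat (card (S a b k)) * monom (1::int) k) = Lp (a+b) (int a - int b) False"
proof -
  have finW: "finite (Wset a b)" unfolding Wset_def[OF ba] by (rule fin_len)
  have sub: "row_standard a b \<subseteq> fill ` Wset a b"
  proof
    fix \<tau> assume r: "\<tau> \<in> row_standard a b"
    show "\<tau> \<in> fill ` Wset a b"
      using fill_tw[OF r ba] tw_W[OF r ba] by (metis image_eqI)
  qed
  have finR: "finite (row_standard a b)" using finite_surj[OF finW sub] .
  have bnd: "\<tau> \<in> row_standard a b \<Longrightarrow> num_inversions a b \<tau> \<le> a + b" for \<tau>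
  proof -
    assume r: "\<tau> \<in> row_standard a b"
    have "cr (tw a b \<tau>) False \<le> card {1..a+b}"
      unfolding cr_def using length_tw[OF r ba] by (intro card_mono) auto
    then show ?thesis using inv_cr[OF r ba] by simp
  qed
  have "(\<Sum>k\<le>a+b. of_nat (card (S a b k)) * monom (1::int) k)
      = (\<Sum>k\<le>a+b. (\<Sum>\<tau>\<in>{\<tau> \<in> row_standard a b. num_inversions a b \<tau> = k}. monom (1::int) (num_inversions a b \<tau>)))"
    by (intro sum.cong refl) (simp add: S_def)
  also have "\<dots> = (\<Sum>\<tau>\<in>row_standard a b. monom (1::int) (num_inversions a b \<tau>))"
    by (rule sum.group) (use finR bnd in auto)
  also have "\<dots> = (\<Sum>w\<in>Wset a b. [:0,1:] ^ cr w False)"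
  proof (rule sum.reindex_bij_witness[where i=fill and j="tw a b"])
    fix \<tau> assume r: "\<tau> \<in> row_standard a b"
    show "fill (tw a b \<tau>) = \<tau>" by (rule fill_tw[OF r ba])
    show "tw a b \<tau> \<in> Wset a b" by (rule tw_W[OF r ba])
    show "[:0, 1:] ^ cr (tw a b \<tau>) False = monom 1 (num_inversions a b \<tau>)"
      by (simp add: inv_cr[OF r ba] monom_altdef)
  next
    fix w assume w: "w \<in> Wset a b"
    show "tw a b (fill w) = w" by (rule tw_fill[OF ba w])
    show "fill w \<in> row_standard a b" by (rule fill_rs[OF ba w])
  qed
  also have "\<dots> = Lp (a+b) (int a - int b) False" by (simp add: Lp_def Wset_def[OF ba])
  finally show ?thesis .
qed

theorem mainTheorem10:
  fixes a b :: nat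
  assumes "a \<ge> b" and "b \<ge> 1"
  shows "(\<Sum>k\<le>a+b. of_nat (card (S a b k)) * monom (1::int) k)
       = (\<Sum>i\<le>a+b. of_nat (card (D a b i)) * [:1, 1:] ^ i)"
proof -
  have "(\<Sum>k\<le>a+b. of_nat (card (S a b k)) * monom (1::int) k) = Lp (a+b) (int a - int b) False"
    by (rule lhs_eq) (use assms in simp)
  also have "\<dots> = Rp (a+b) (int a - int b)" using L_eq_R assms by simp
  also have "\<dots> = (\<Sum>i\<le>a+b. of_nat (card (D a b i)) * [:1, 1:] ^ i)" by (rule rhs_eq[symmetric])
  finally show ?thesis .
qed


end
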